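(* Let $\gamma>0$, $n\ge2$, and let $\mu$ be a distribution on $\mathbb{R}$ with $\bar\mu(x)>0$ for all $x\in\mathbb{R}$. For $A>0$ define $$J_1(x)=\int_{(-\infty,A]}\bar\mu(x-u)\,\mu^{(n-1)*}(du),$$ $$J_2(x)=\int_{(A,\,x-A]}\bar\mu(x-u)\,\mu^{(n-1)*}(du)+\bar\mu(A)\,\overline{\mu^{(n-1)*}}(x-A),$$ $$J_3(x)=\int_{(A,\,x-A]}\bar\mu(x-u)\,\mu(du)+\bar\mu(A)\,\bar\mu(x-A),$$ $$\varepsilon(A)=\limsup_{x\to\infty}\frac{J_2(x)+J_3(x)}{\overline{\mu^{n*}}(x)}.$$ (i) For every $A>0$ and every $x>nA$, $$\overline{\mu^{n*}}(x)\le nJ_1(x)+nJ_2(x)$$ and $$nJ_1(x)-\tfrac12n(n-3)J_2(x)-\tfrac12n(n-1)J_3(x)\le\overline{\mu^{n*}}(x).$$ (ii) If $\mu^{n*}\in\mathcal{S}(\gamma)$, then $\lim_{A\to\infty}\varepsilon(A)=0$, and consequently $$\lim_{A\to\infty}\liminf_{x\to\infty}\frac{nJ_1(x)}{\overline{\mu^{n*}}(x)}=\lim_{A\to\infty}\limsup_{x\to\infty}\frac{nJ_1(x)}{\overline{\mu^{n*}}(x)}=1.$$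
   Context: For a probability distribution $\rho$ on $\mathbb{R}$: $\bar\rho(x):=\rho((x,\infty))$, $\rho^{n*}$ is the $n$-th convolution power ($\rho^{1*}=\rho$), $\widehat\rho(\gamma):=\int e^{\gamma x}\rho(dx)$. $f\sim g$ means $f(x)/g(x)\to1$ as $x\to\infty$. For $\gamma\ge0$: $\rho\in\mathcal{L}(\gamma)$ if $\bar\rho(x)>0$ for all $x$ and $\bar\rho(x+a)\sim e^{-\gamma a}\bar\rho(x)$ for every $a\in\mathbb{R}$; $\rho\in\mathcal{S}(\gamma)$ if $\rho\in\mathcal{L}(\gamma)$, $\widehat\rho(\gamma)<\infty$ and $\overline{\rho^{2*}}(x)\sim2\widehat\rho(\gamma)\bar\rho(x)$. *)

theory Defs
  imports "HOL-Probability.Probability" "HOL-Probability.Convolution"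
begin

definition real_distribution :: "real measure \<Rightarrow> bool" where
  "real_distribution \<rho> \<longleftrightarrow> prob_space \<rho> \<and> sets \<rho> = sets borel"

definition tail :: "real measure \<Rightarrow> real \<Rightarrow> real" where
  "tail \<rho> x = measure \<rho> {x<..}"

text \<open>n-th convolution power, with rho^{1*} = rho (index 0 is an unused dummy).\<close>
fun conv_pow :: "real measure \<Rightarrow> nat \<Rightarrow> real measure" where
  "conv_pow \<rho> 0 = return borel 0"
| "conv_pow \<rho> (Suc 0) = \<rho>"
| "conv_pow \<rho> (Suc (Suc n)) = convolution \<rho> (conv_pow \<rho> (Suc n))"

definition mgf :: "real measure \<Rightarrow> real \<Rightarrow> ennreal" where
  "mgf \<rho> \<gamma> = (\<integral>\<^sup>+ x. ennreal (exp (\<gamma> * x)) \<partial>\<rho>)"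

definition class_L :: "real \<Rightarrow> real measure \<Rightarrow> bool" where
  "class_L \<gamma> \<rho> \<longleftrightarrow> (\<forall>x. tail \<rho> x > 0) \<and>
     (\<forall>a. ((\<lambda>x. tail \<rho> (x + a) / tail \<rho> x) \<longlongrightarrow> exp (- \<gamma> * a)) at_top)"

definition class_S :: "real \<Rightarrow> real measure \<Rightarrow> bool" where
  "class_S \<gamma> \<rho> \<longleftrightarrow> class_L \<gamma> \<rho> \<and> mgf \<rho> \<gamma> < \<infinity> \<and>
     ((\<lambda>x. tail (conv_pow \<rho> 2) x / tail \<rho> x) \<longlongrightarrow> 2 * enn2real (mgf \<rho> \<gamma>)) at_top"

definition J1 :: "real measure \<Rightarrow> nat \<Rightarrow> real \<Rightarrow> real \<Rightarrow> real" where
  "J1 \<mu> n A x = (LINT u:{..A}|conv_pow \<mu> (n - 1). tail \<mu> (x - u))"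

definition J2 :: "real measure \<Rightarrow> nat \<Rightarrow> real \<Rightarrow> real \<Rightarrow> real" where
  "J2 \<mu> n A x = (LINT u:{A<..x - A}|conv_pow \<mu> (n - 1). tail \<mu> (x - u))
      + tail \<mu> A * tail (conv_pow \<mu> (n - 1)) (x - A)"

definition J3 :: "real measure \<Rightarrow> real \<Rightarrow> real \<Rightarrow> real" where
  "J3 \<mu> A x = (LINT u:{A<..x - A}|\<mu>. tail \<mu> (x - u)) + tail \<mu> A * tail \<mu> (x - A)"

definition eps :: "real measure \<Rightarrow> nat \<Rightarrow> real \<Rightarrow> ereal" where
  "eps \<mu> n A = Limsup at_top (\<lambda>x. ereal ((J2 \<mu> n A x + J3 \<mu> A x) / tail (conv_pow \<mu> n) x))"

end

theory Submission
  imports Defs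
begin

lemma rd_prob: "real_distribution M \<Longrightarrow> prob_space M" by (simp add: real_distribution_def)
lemma rd_sets: "real_distribution M \<Longrightarrow> sets M = sets borel" by (simp add: real_distribution_def)
lemma rd_space: "real_distribution M \<Longrightarrow> space M = UNIV"
  using sets_eq_imp_space_eq[OF rd_sets] by simp

lemma rd_convolution:
  assumes "real_distribution M" "real_distribution N"
  shows "real_distribution (convolution M N)"
proof -
  interpret M: prob_space M using assms rd_prob by blast
  interpret N: prob_space N using assms rd_prob by blast
  interpret pair_prob_space M N ..
  have [measurable_cong]: "sets M = sets borel" "sets N = sets borel" using assms by (auto simp: rd_sets)
  have "prob_space (distr (M \<Otimes>\<^sub>M N) borel (\<lambda>(x,y). x+y))"
    by (rule prob_space_distr) measurable
  thus ?thesis by (simp add: real_distribution_def convolution_def)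
qed

lemma rd_conv_pow: "real_distribution \<mu> \<Longrightarrow> k \<ge> 1 \<Longrightarrow> real_distribution (conv_pow \<mu> k)"
proof (induction \<mu> k rule: conv_pow.induct)
  case (3 \<rho> n)
  then show ?case by (simp add: rd_convolution)
qed auto

lemma conv_pow_Suc: "k \<ge> 1 \<Longrightarrow> conv_pow \<mu> (Suc k) = convolution \<mu> (conv_pow \<mu> k)"
  by (cases k) auto

lemma tail_nonneg: "0 \<le> tail \<rho> x" by (simp add: tail_def)

lemma tail_le1: "real_distribution \<rho> \<Longrightarrow> tail \<rho> x \<le> 1"
  by (simp add: tail_def prob_space.prob_le_1 rd_prob)

lemma tail_mono: assumes "real_distribution \<rho>" "x \<le> y" shows "tail \<rho> y \<le> tail \<rho> x"
proof -
  interpret prob_space \<rho> using assms rd_prob by blast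
  show ?thesis unfolding tail_def
    using assms by (intro finite_measure_mono) (auto simp: rd_sets)
qed

lemma tail_meas[measurable]: assumes "real_distribution \<rho>" shows "tail \<rho> \<in> borel_measurable borel"
proof -
  have "mono (\<lambda>x. - tail \<rho> x)" by (auto simp: mono_def intro: tail_mono[OF assms])
  then have "(\<lambda>x. - tail \<rho> x) \<in> borel_measurable borel" by (rule borel_measurable_mono)
  then have "(\<lambda>x. - (- tail \<rho> x)) \<in> borel_measurable borel" by measurable
  then show ?thesis by simp
qed

definition g1 :: "real \<Rightarrow> real \<Rightarrow> real \<times> real \<Rightarrow> real" where
  "g1 A x z = (if snd z \<le> A \<and> fst z + snd z > x then 1 else 0)"
definition g2 :: "real \<Rightarrow> real \<Rightarrow> real \<times> real \<Rightarrow> real" where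
  "g2 A x z = (if fst z > A \<and> snd z > A \<and> fst z + snd z > x then 1 else 0)"

lemma g1_meas[measurable]: "g1 A x \<in> borel_measurable (borel \<Otimes>\<^sub>M borel)"
  unfolding g1_def by measurable
lemma g2_meas[measurable]: "g2 A x \<in> borel_measurable (borel \<Otimes>\<^sub>M borel)"
  unfolding g2_def by measurable

lemma integral_pair_snd:
  fixes f :: "real \<times> real \<Rightarrow> real"
  assumes "real_distribution \<alpha>" "real_distribution \<beta>"
    and f: "f \<in> borel_measurable (borel \<Otimes>\<^sub>M borel)" and b: "\<And>z. \<bar>f z\<bar> \<le> 1"
  shows "(\<integral>z. f z \<partial>(\<beta> \<Otimes>\<^sub>M \<alpha>)) = (\<integral>u. (\<integral>t. f (t,u) \<partial>\<beta>) \<partial>\<alpha>)"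
proof -
  interpret A: prob_space \<alpha> using assms rd_prob by blast
  interpret B: prob_space \<beta> using assms rd_prob by blast
  interpret pair_prob_space \<beta> \<alpha> ..
  have [measurable_cong]: "sets \<alpha> = sets borel" "sets \<beta> = sets borel" using assms by (auto simp: rd_sets)
  have fm: "f \<in> borel_measurable (\<beta> \<Otimes>\<^sub>M \<alpha>)"
    using f by (simp add: measurable_def space_pair_measure sets_pair_measure_cong[of \<beta> borel \<alpha> borel] rd_space assms)
  have int0: "integrable (\<beta> \<Otimes>\<^sub>M \<alpha>) f"
    by (rule P.integrable_const_bound[where B=1]) (use fm b in auto)
  have int: "integrable (\<beta> \<Otimes>\<^sub>M \<alpha>) (\<lambda>(t,u). f (t,u))"
    using int0 by (simp add: case_prod_eta)
  show ?thesis using integral_snd[OF int] by simp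
qed


lemma integrable_bounded_rd:
  fixes f :: "real \<Rightarrow> real"
  assumes "real_distribution \<nu>" "f \<in> borel_measurable borel" "\<And>u. \<bar>f u\<bar> \<le> B"
  shows "integrable \<nu> f"
proof -
  interpret prob_space \<nu> using assms rd_prob by blast
  have [measurable_cong]: "sets \<nu> = sets borel" using assms by (simp add: rd_sets)
  show ?thesis
    by (rule integrable_const_bound[where B=B]) (use assms in auto)
qed

lemma integrable_ind_rd:
  assumes "real_distribution \<nu>" "S \<in> sets borel"
  shows "integrable \<nu> (indicator S :: real \<Rightarrow> real)"
  using assms(1) by (rule integrable_bounded_rd[where B=1]) (use assms(2) in \<open>auto simp: indicator_def\<close>)

lemma J1_eq:
  assumes "real_distribution \<mu>" "real_distribution \<nu>"
  shows "(LINT u:{..A}|\<nu>. tail \<mu> (x - u)) = (\<integral>z. g1 A x z \<partial>(\<mu> \<Otimes>\<^sub>M \<nu>))"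
proof -
  have "(\<integral>z. g1 A x z \<partial>(\<mu> \<Otimes>\<^sub>M \<nu>)) = (\<integral>u. (\<integral>t. g1 A x (t,u) \<partial>\<mu>) \<partial>\<nu>)"
    by (rule integral_pair_snd) (auto simp: g1_def assms)
  also have "\<dots> = (\<integral>u. indicator {..A} u *\<^sub>R tail \<mu> (x - u) \<partial>\<nu>)"
  proof (rule Bochner_Integration.integral_cong[OF refl])
    fix u
    have "(\<integral>t. g1 A x (t,u) \<partial>\<mu>) = (\<integral>t. indicator {..A} u * indicator {x-u<..} t \<partial>\<mu>)"
      by (rule Bochner_Integration.integral_cong) (auto simp: g1_def indicator_def)
    also have "\<dots> = indicator {..A} u * measure \<mu> {x-u<..}" using rd_space[OF assms(1)] by simp
    finally show "(\<integral>t. g1 A x (t,u) \<partial>\<mu>) = indicator {..A} u *\<^sub>R tail \<mu> (x - u)"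
      by (simp add: tail_def)
  qed
  finally show ?thesis by (simp add: set_lebesgue_integral_def)
qed

lemma J2_eq:
  assumes "real_distribution \<mu>" "real_distribution \<nu>" "2 * A \<le> x"
  shows "(LINT u:{A<..x - A}|\<nu>. tail \<mu> (x - u)) + tail \<mu> A * tail \<nu> (x - A)
           = (\<integral>z. g2 A x z \<partial>(\<mu> \<Otimes>\<^sub>M \<nu>))"
proof -
  interpret M: prob_space \<mu> using assms rd_prob by blast
  interpret N: prob_space \<nu> using assms rd_prob by blast
  have [measurable_cong]: "sets \<mu> = sets borel" "sets \<nu> = sets borel" using assms by (auto simp: rd_sets)
  note tm[measurable] = tail_meas[OF assms(1)]
  have "(\<integral>z. g2 A x z \<partial>(\<mu> \<Otimes>\<^sub>M \<nu>)) = (\<integral>u. (\<integral>t. g2 A x (t,u) \<partial>\<mu>) \<partial>\<nu>)"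
    by (rule integral_pair_snd) (auto simp: g2_def assms)
  also have "\<dots> = (\<integral>u. indicator {A<..x-A} u * tail \<mu> (x - u) + indicator {x-A<..} u * tail \<mu> A \<partial>\<nu>)"
  proof (rule Bochner_Integration.integral_cong[OF refl])
    fix u
    have "(\<integral>t. g2 A x (t,u) \<partial>\<mu>) = (\<integral>t. indicator {A<..x-A} u * indicator {x-u<..} t
             + indicator {x-A<..} u * indicator {A<..} t \<partial>\<mu>)"
      using assms(3) by (intro Bochner_Integration.integral_cong) (auto simp: g2_def indicator_def)
    also have "\<dots> = indicator {A<..x-A} u * measure \<mu> {x-u<..} + indicator {x-A<..} u * measure \<mu> {A<..}"
      using rd_space[OF assms(1)] by (subst Bochner_Integration.integral_add) (auto simp: integrable_ind_rd assms)
    finally show "(\<integral>t. g2 A x (t,u) \<partial>\<mu>) = indicator {A<..x-A} u * tail \<mu> (x - u) + indicator {x-A<..} u * tail \<mu> A"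
      by (simp add: tail_def)
  qed
  also have "\<dots> = (\<integral>u. indicator {A<..x-A} u * tail \<mu> (x - u) \<partial>\<nu>) + (\<integral>u. indicator {x-A<..} u * tail \<mu> A \<partial>\<nu>)"
  proof (rule Bochner_Integration.integral_add)
    show "integrable \<nu> (\<lambda>u. indicator {A<..x - A} u * tail \<mu> (x - u))"
      using assms(2) by (rule integrable_bounded_rd[where B=1])
        (auto simp: indicator_def tail_nonneg tail_le1 assms(1) abs_le_iff intro: order_trans[OF _ tail_nonneg])
    show "integrable \<nu> (\<lambda>u. indicator {x - A<..} u * tail \<mu> A)"
      using assms(2) by (rule integrable_bounded_rd[where B=1])
        (auto simp: indicator_def tail_nonneg tail_le1 assms(1) abs_le_iff intro: order_trans[OF _ tail_nonneg])
  qed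
  also have "\<dots> = (LINT u:{A<..x - A}|\<nu>. tail \<mu> (x - u)) + tail \<mu> A * tail \<nu> (x - A)"
    using rd_space[OF assms(2)] by (simp add: set_lebesgue_integral_def tail_def mult.commute)
  finally show ?thesis ..
qed

lemma J1_g: "real_distribution \<mu> \<Longrightarrow> n \<ge> 2 \<Longrightarrow> J1 \<mu> n A x = (\<integral>z. g1 A x z \<partial>(\<mu> \<Otimes>\<^sub>M conv_pow \<mu> (n-1)))"
  unfolding J1_def by (rule J1_eq) (auto intro: rd_conv_pow)

lemma J2_g: "real_distribution \<mu> \<Longrightarrow> n \<ge> 2 \<Longrightarrow> 2 * A \<le> x \<Longrightarrow> J2 \<mu> n A x = (\<integral>z. g2 A x z \<partial>(\<mu> \<Otimes>\<^sub>M conv_pow \<mu> (n-1)))"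
  unfolding J2_def by (rule J2_eq) (auto intro: rd_conv_pow)

lemma J3_g: "real_distribution \<mu> \<Longrightarrow> 2 * A \<le> x \<Longrightarrow> J3 \<mu> A x = (\<integral>z. g2 A x z \<partial>(\<mu> \<Otimes>\<^sub>M \<mu>))"
  unfolding J3_def by (rule J2_eq) auto


lemma h_eq:
  assumes "S = t + r"
  shows "g1 A x (t, r) + g2 A x (t, r) = (if S > x \<and> (t > A \<or> r \<le> A) then 1 else 0)"
  using assms by (auto simp: g1_def g2_def)

lemma g_nonneg: "0 \<le> g1 A x z" "0 \<le> g2 A x z" by (auto simp: g1_def g2_def)

lemma pw1:
  fixes w :: "nat \<Rightarrow> real"
  assumes "real n * A < x"
  shows "(if (\<Sum>i<n. w i) > x then 1 else 0) \<le>
    (\<Sum>i<n. g1 A x (w i, \<Sum>j\<in>{..<n}-{i}. w j) + g2 A x (w i, \<Sum>j\<in>{..<n}-{i}. w j))"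
proof (cases "(\<Sum>i<n. w i) > x")
  case False
  then show ?thesis by (simp add: sum_nonneg g_nonneg add_nonneg_nonneg)
next
  case True
  have "\<exists>i<n. w i > A"
  proof (rule ccontr)
    assume "\<not> (\<exists>i<n. w i > A)"
    then have "(\<Sum>i<n. w i) \<le> of_nat (card {..<n}) * A"
      by (intro sum_bounded_above) auto
    with True assms show False by simp
  qed
  then obtain i where i: "i < n" "w i > A" by blast
  let ?h = "\<lambda>i. g1 A x (w i, \<Sum>j\<in>{..<n}-{i}. w j) + g2 A x (w i, \<Sum>j\<in>{..<n}-{i}. w j)"
  have "?h i = 1"
    using True i by (subst h_eq[where S="\<Sum>i<n. w i"]) (auto simp: sum_diff1)
  moreover have "?h i \<le> (\<Sum>i<n. ?h i)"
    using i by (intro member_le_sum) (auto simp: g_nonneg add_nonneg_nonneg)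
  ultimately show ?thesis using True by simp
qed


lemma pw2:
  fixes w :: "nat \<Rightarrow> real"
  assumes "2 * A < x"
  shows "(\<Sum>i<n. g1 A x (w i, \<Sum>j\<in>{..<n}-{i}. w j) + g2 A x (w i, \<Sum>j\<in>{..<n}-{i}. w j)) \<le>
    (if (\<Sum>i<n. w i) > x then 1 else 0) +
    (\<Sum>j<n. \<Sum>i<j. g2 A x (w i, w j) + g2 A x (w i, \<Sum>k\<in>{..<n}-{i}. w k))"
proof -
  define S where "S = (\<Sum>i<n. w i)"
  define r where "r i = (\<Sum>j\<in>{..<n}-{i}. w j)" for i
  define F where "F i j = g2 A x (w i, w j) + g2 A x (w i, r i)" for i j
  define E where "E = {i. i < n \<and> S > x \<and> (w i > A \<or> r i \<le> A)}"
  have rS: "i < n \<Longrightarrow> r i = S - w i" for i by (simp add: r_def S_def sum_diff1)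
  have Fnn: "0 \<le> F i j" for i j by (simp add: F_def g_nonneg add_nonneg_nonneg)
  have finE: "finite E" by (simp add: E_def)
  have EA: "i \<in> E \<Longrightarrow> w i > A" for i
    using assms by (auto simp: E_def rS)
  have "(\<Sum>i<n. g1 A x (w i, r i) + g2 A x (w i, r i)) = (\<Sum>i<n. if i \<in> E then 1 else 0)"
    by (intro sum.cong refl, subst h_eq[where S=S]) (auto simp: rS E_def)
  also have "\<dots> = real (card E)"
  proof -
    have sub: "E \<subseteq> {..<n}" by (auto simp: E_def)
    show ?thesis by (simp add: sum.If_cases Int_absorb1[OF sub] Int_absorb2[OF sub])
  qed
  also have "\<dots> \<le> (if S > x then 1 else 0) + (\<Sum>j<n. \<Sum>i<j. F i j)"
  proof (cases "E = {}")
    case True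
    then show ?thesis by (simp add: sum_nonneg Fnn)
  next
    case False
    define m where "m = Min E"
    have mE: "m \<in> E" using False finE by (simp add: m_def)
    then have Sx: "S > x" by (simp add: E_def)
    have "card E = Suc (card (E - {m}))"
      using card_Suc_Diff1[OF finE mE] by simp
    then have "real (card E) = 1 + real (card (E - {m}))" by simp
    also have "real (card (E - {m})) = (\<Sum>j\<in>E-{m}. 1)" by simp
    also have "\<dots> \<le> (\<Sum>j\<in>E-{m}. \<Sum>i<j. F i j)"
    proof (rule sum_mono)
      fix j assume j: "j \<in> E - {m}"
      have "m \<le> j" using j finE unfolding m_def by (intro Min_le) auto
      then have mj: "m < j" using j by auto
      have jn: "j < n" using j by (simp add: E_def)
      have mn: "m < n" using mE by (simp add: E_def)
      have "1 \<le> F m j"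
      proof (cases "w m + w j > x")
        case True
        then have "g2 A x (w m, w j) = 1" using EA mE j by (auto simp: g2_def)
        then show ?thesis by (simp add: F_def g_nonneg)
      next
        case False
        have "S - w m \<ge> w j"
        proof -
          have "S - w m = (\<Sum>k\<in>{..<n}-{m}. w k)" using rS mn r_def by simp
          also have "\<dots> = w j + (\<Sum>k\<in>{..<n}-{m}-{j}. w k)"
            using jn mj by (subst sum.remove[of _ j]) auto
          finally have eq: "S - w m = w j + (\<Sum>k\<in>{..<n}-{m}-{j}. w k)" .
          show ?thesis using Sx False eq by simp
        qed
        then have "A < S - w m" using EA[of j] j by auto
        moreover have "A < w m" using EA mE by auto
        ultimately have "g2 A x (w m, r m) = 1" using Sx rS[OF mn] by (auto simp: g2_def)
        then show ?thesis by (simp add: F_def g_nonneg)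
      qed
      also have "F m j \<le> (\<Sum>i<j. F i j)"
        using mj by (intro member_le_sum) (auto simp: Fnn)
      finally show "1 \<le> (\<Sum>i<j. F i j)" .
    qed
    also have "\<dots> \<le> (\<Sum>j<n. \<Sum>i<j. F i j)"
      by (intro sum_mono2) (auto simp: E_def sum_nonneg Fnn)
    finally show ?thesis using Sx by simp
  qed
  finally show ?thesis by (simp add: S_def r_def F_def)
qed


context
  fixes \<mu> :: "real measure" and I :: "nat set"
  assumes rd: "real_distribution \<mu>" and fin: "finite I"
begin

lemma PP_prob: "prob_space (PiM I (\<lambda>_. \<mu>))"
  by (rule prob_space_PiM) (simp add: rd_prob[OF rd])

lemma PP_comp_meas: "i \<in> I \<Longrightarrow> (\<lambda>\<omega>. \<omega> i) \<in> borel_measurable (PiM I (\<lambda>_. \<mu>))"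
  using measurable_component_singleton[of i I "\<lambda>_. \<mu>"]
    measurable_cong_sets[OF refl rd_sets[OF rd], of "PiM I (\<lambda>_. \<mu>)"] by simp

lemma PP_comp_meas_all: "(\<lambda>\<omega>. \<omega> i) \<in> borel_measurable (PiM I (\<lambda>_. \<mu>))"
proof (cases "i \<in> I")
  case True then show ?thesis by (rule PP_comp_meas)
next
  case False
  have "(\<lambda>\<omega>. undefined :: real) \<in> borel_measurable (PiM I (\<lambda>_. \<mu>))" by simp
  then show ?thesis
  proof (rule measurable_cong[THEN iffD1, rotated])
    fix w assume "w \<in> space (PiM I (\<lambda>_. \<mu>))"
    then have "w \<in> PiE I (\<lambda>_. space \<mu>)" by (simp add: space_PiM)
    from PiE_arb[OF this False] show "undefined = w i" by (rule sym)
  qed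
qed

lemma PP_sum_meas: "J \<subseteq> I \<Longrightarrow> (\<lambda>\<omega>. \<Sum>i\<in>J. \<omega> i) \<in> borel_measurable (PiM I (\<lambda>_. \<mu>))"
  by (intro borel_measurable_sum PP_comp_meas) auto

lemma PP_comp: "i \<in> I \<Longrightarrow> distr (PiM I (\<lambda>_. \<mu>)) borel (\<lambda>\<omega>. \<omega> i) = \<mu>"
proof -
  assume i: "i \<in> I"
  have "distr (PiM I (\<lambda>_. \<mu>)) borel (\<lambda>\<omega>. \<omega> i) = distr (PiM I (\<lambda>_. \<mu>)) \<mu> (\<lambda>\<omega>. \<omega> i)"
    by (rule distr_cong) (auto simp: rd_sets[OF rd])
  also have "\<dots> = \<mu>" by (rule distr_PiM_component) (auto simp: rd_prob[OF rd] i)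
  finally show ?thesis .
qed

lemma PP_indep: "I \<noteq> {} \<Longrightarrow> prob_space.indep_vars (PiM I (\<lambda>_. \<mu>)) (\<lambda>_. borel) (\<lambda>i \<omega>. \<omega> i) I"
proof -
  interpret prob_space "PiM I (\<lambda>_. \<mu>)" by (rule PP_prob)
  assume ne: "I \<noteq> {}"
  have "distr (PiM I (\<lambda>_. \<mu>)) (PiM I (\<lambda>_. borel)) (\<lambda>x. \<lambda>i\<in>I. x i)
      = distr (PiM I (\<lambda>_. \<mu>)) (PiM I (\<lambda>_. \<mu>)) (\<lambda>x. x)"
    by (rule distr_cong) (auto simp: rd_sets[OF rd] space_PiM intro!: sets_PiM_cong)
  also have "\<dots> = PiM I (\<lambda>_. \<mu>)" by (rule distr_id)
  also have "\<dots> = PiM I (\<lambda>i. distr (PiM I (\<lambda>_. \<mu>)) borel (\<lambda>\<omega>. \<omega> i))"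
    by (rule PiM_cong) (auto simp: PP_comp)
  finally show ?thesis
    by (subst indep_vars_iff_distr_eq_PiM[OF ne]) (auto simp: PP_comp_meas_all)
qed

lemma PP_sum_law: "J \<subseteq> I \<Longrightarrow> J \<noteq> {} \<Longrightarrow> distr (PiM I (\<lambda>_. \<mu>)) borel (\<lambda>\<omega>. \<Sum>i\<in>J. \<omega> i) = conv_pow \<mu> (card J)"
proof -
  interpret prob_space "PiM I (\<lambda>_. \<mu>)" by (rule PP_prob)
  assume "J \<subseteq> I" "J \<noteq> {}"
  moreover have "finite J" using \<open>J \<subseteq> I\<close> fin finite_subset by blast
  ultimately have "finite J" "J \<noteq> {}" "J \<subseteq> I" by auto
  then show ?thesis
  proof (induction J rule: finite_ne_induct)
    case (singleton a)
    then show ?case by (simp add: PP_comp)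
  next
    case (insert a F)
    have ind: "indep_vars (\<lambda>_. borel) (\<lambda>i \<omega>. \<omega> i) (insert a F)"
      using PP_indep indep_vars_subset insert.prems by blast
    have iv: "indep_var borel (\<lambda>\<omega>. \<omega> a) borel (\<lambda>\<omega>. \<Sum>i\<in>F. \<omega> i)"
      using indep_vars_sum[OF insert.hyps(1,3) ind] by simp
    have "distr (PiM I (\<lambda>_. \<mu>)) borel (\<lambda>\<omega>. \<Sum>i\<in>insert a F. \<omega> i)
        = distr (PiM I (\<lambda>_. \<mu>)) borel (\<lambda>\<omega>. \<omega> a + (\<Sum>i\<in>F. \<omega> i))"
      using insert.hyps by simp
    also have "\<dots> = convolution (distr (PiM I (\<lambda>_. \<mu>)) borel (\<lambda>\<omega>. \<omega> a))
                                 (distr (PiM I (\<lambda>_. \<mu>)) borel (\<lambda>\<omega>. \<Sum>i\<in>F. \<omega> i))"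
      by (rule sum_indep_random_variable[OF iv]) (use insert.prems in \<open>auto intro: PP_comp_meas PP_sum_meas\<close>)
    also have "\<dots> = convolution \<mu> (conv_pow \<mu> (card F))"
      using insert by (simp add: PP_comp)
    also have "\<dots> = conv_pow \<mu> (card (insert a F))"
      using insert.hyps by (simp add: conv_pow_Suc card_gt_0_iff Suc_leI)
    finally show ?case .
  qed
qed

lemma PP_pair_rest:
  assumes i: "i \<in> I" and c: "card I \<ge> 2"
  shows "distr (PiM I (\<lambda>_. \<mu>)) (borel \<Otimes>\<^sub>M borel) (\<lambda>\<omega>. (\<omega> i, \<Sum>j\<in>I-{i}. \<omega> j))
       = \<mu> \<Otimes>\<^sub>M conv_pow \<mu> (card I - 1)"
proof -
  interpret prob_space "PiM I (\<lambda>_. \<mu>)" by (rule PP_prob)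
  have ne: "I \<noteq> {}" using i by auto
  have cI: "card (I - {i}) = card I - 1" using i fin by (simp add: card_Diff_singleton)
  have ne2: "I - {i} \<noteq> {}" using c cI by (intro notI) simp
  have ind: "indep_vars (\<lambda>_. borel) (\<lambda>i \<omega>. \<omega> i) (insert i (I - {i}))"
    using PP_indep[OF ne] i by (simp add: insert_absorb)
  have iv: "indep_var borel (\<lambda>\<omega>. \<omega> i) borel (\<lambda>\<omega>. \<Sum>j\<in>I-{i}. \<omega> j)"
    using indep_vars_sum[OF _ _ ind] fin by simp
  have "distr (PiM I (\<lambda>_. \<mu>)) (borel \<Otimes>\<^sub>M borel) (\<lambda>\<omega>. (\<omega> i, \<Sum>j\<in>I-{i}. \<omega> j))
      = distr (PiM I (\<lambda>_. \<mu>)) borel (\<lambda>\<omega>. \<omega> i) \<Otimes>\<^sub>M distr (PiM I (\<lambda>_. \<mu>)) borel (\<lambda>\<omega>. \<Sum>j\<in>I-{i}. \<omega> j)"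
    using iv unfolding indep_var_distribution_eq by simp
  also have "\<dots> = \<mu> \<Otimes>\<^sub>M conv_pow \<mu> (card I - 1)"
    using i ne2 fin cI by (simp add: PP_comp PP_sum_law)
  finally show ?thesis .
qed

lemma PP_pair_two:
  assumes i: "i \<in> I" and j: "j \<in> I" and ij: "i \<noteq> j"
  shows "distr (PiM I (\<lambda>_. \<mu>)) (borel \<Otimes>\<^sub>M borel) (\<lambda>\<omega>. (\<omega> i, \<omega> j)) = \<mu> \<Otimes>\<^sub>M \<mu>"
proof -
  interpret prob_space "PiM I (\<lambda>_. \<mu>)" by (rule PP_prob)
  have ne: "I \<noteq> {}" using i by auto
  have ind: "indep_vars (\<lambda>_. borel) (\<lambda>i \<omega>. \<omega> i) (insert i {j})"
    by (rule indep_vars_subset[OF PP_indep[OF ne]]) (use i j in auto)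
  have iv: "indep_var borel (\<lambda>\<omega>. \<omega> i) borel (\<lambda>\<omega>. \<omega> j)"
    using indep_vars_sum[OF _ _ ind] ij by simp
  have "distr (PiM I (\<lambda>_. \<mu>)) (borel \<Otimes>\<^sub>M borel) (\<lambda>\<omega>. (\<omega> i, \<omega> j))
      = distr (PiM I (\<lambda>_. \<mu>)) borel (\<lambda>\<omega>. \<omega> i) \<Otimes>\<^sub>M distr (PiM I (\<lambda>_. \<mu>)) borel (\<lambda>\<omega>. \<omega> j)"
    using iv unfolding indep_var_distribution_eq by simp
  also have "\<dots> = \<mu> \<Otimes>\<^sub>M \<mu>"
    using i j by (simp add: PP_comp)
  finally show ?thesis .
qed

end


lemma sum_lessThan_real: "(\<Sum>j<n. real j) = real n * (real n - 1) / 2"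
  by (induction n) (auto simp: field_simps)

theorem part1:
  fixes \<mu> :: "real measure" and n :: nat and A x :: real
  assumes rd: "real_distribution \<mu>" and n2: "n \<ge> 2" and A: "A > 0" and xA: "real n * A < x"
  shows "tail (conv_pow \<mu> n) x \<le> real n * J1 \<mu> n A x + real n * J2 \<mu> n A x \<and>
         real n * J1 \<mu> n A x - real n * (real n - 3) / 2 * J2 \<mu> n A x
           - real n * (real n - 1) / 2 * J3 \<mu> A x \<le> tail (conv_pow \<mu> n) x"
proof -
  define I where "I = {..<n}"
  define PP where "PP = PiM I (\<lambda>_. \<mu>)"
  have fin: "finite I" by (simp add: I_def)
  interpret prob_space PP unfolding PP_def by (rule PP_prob[OF rd fin])
  have x2: "2 * A < x"
  proof -
    have "2 * A \<le> real n * A" using n2 A by (intro mult_right_mono) auto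
    then show ?thesis using xA by simp
  qed
  have cm: "\<And>i. i \<in> I \<Longrightarrow> (\<lambda>\<omega>. \<omega> i) \<in> borel_measurable PP"
    unfolding PP_def by (rule PP_comp_meas[OF rd fin])
  have sm: "\<And>J. J \<subseteq> I \<Longrightarrow> (\<lambda>\<omega>. \<Sum>i\<in>J. \<omega> i) \<in> borel_measurable PP"
    unfolding PP_def by (rule PP_sum_meas[OF rd fin])
  have bint: "\<And>f :: _ \<Rightarrow> real. f \<in> borel_measurable PP \<Longrightarrow> (\<And>\<omega>. \<bar>f \<omega>\<bar> \<le> 1) \<Longrightarrow> integrable PP f"
    by (rule integrable_const_bound[where B=1]) auto
  define R where "R i \<omega> = (\<Sum>j\<in>{..<n}-{i}. \<omega> j)" for i and \<omega> :: "nat \<Rightarrow> real"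
  have Zm: "i \<in> I \<Longrightarrow> (\<lambda>\<omega>. (\<omega> i, R i \<omega>)) \<in> measurable PP (borel \<Otimes>\<^sub>M borel)" for i
    unfolding R_def using cm sm[of "{..<n}-{i}"] by (intro measurable_Pair) (auto simp: I_def)
  have Zm2: "i \<in> I \<Longrightarrow> j \<in> I \<Longrightarrow> (\<lambda>\<omega>. (\<omega> i, \<omega> j)) \<in> measurable PP (borel \<Otimes>\<^sub>M borel)" for i j
    using cm by (intro measurable_Pair) auto
  have g1m: "i \<in> I \<Longrightarrow> (\<lambda>\<omega>. g1 A x (\<omega> i, R i \<omega>)) \<in> borel_measurable PP" for i
    using measurable_compose[OF Zm g1_meas] by simp
  have g2m: "i \<in> I \<Longrightarrow> (\<lambda>\<omega>. g2 A x (\<omega> i, R i \<omega>)) \<in> borel_measurable PP" for i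
    using measurable_compose[OF Zm g2_meas] by simp
  have g2m2: "i \<in> I \<Longrightarrow> j \<in> I \<Longrightarrow> (\<lambda>\<omega>. g2 A x (\<omega> i, \<omega> j)) \<in> borel_measurable PP" for i j
    using measurable_compose[OF Zm2 g2_meas] by simp
  have gb: "\<bar>g1 A x z\<bar> \<le> 1" "\<bar>g2 A x z\<bar> \<le> 1" for z by (auto simp: g1_def g2_def)
  have i1: "i \<in> I \<Longrightarrow> integrable PP (\<lambda>\<omega>. g1 A x (\<omega> i, R i \<omega>))" for i by (intro bint g1m gb)
  have i2: "i \<in> I \<Longrightarrow> integrable PP (\<lambda>\<omega>. g2 A x (\<omega> i, R i \<omega>))" for i by (intro bint g2m gb)
  have i3: "i \<in> I \<Longrightarrow> j \<in> I \<Longrightarrow> integrable PP (\<lambda>\<omega>. g2 A x (\<omega> i, \<omega> j))" for i j by (intro bint g2m2 gb)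
  have law1: "i \<in> I \<Longrightarrow> distr PP (borel \<Otimes>\<^sub>M borel) (\<lambda>\<omega>. (\<omega> i, R i \<omega>)) = \<mu> \<Otimes>\<^sub>M conv_pow \<mu> (n - 1)" for i
    unfolding PP_def R_def using PP_pair_rest[OF rd fin, of i] n2 by (simp add: I_def)
  have law2: "i \<in> I \<Longrightarrow> j \<in> I \<Longrightarrow> i \<noteq> j \<Longrightarrow> distr PP (borel \<Otimes>\<^sub>M borel) (\<lambda>\<omega>. (\<omega> i, \<omega> j)) = \<mu> \<Otimes>\<^sub>M \<mu>" for i j
    unfolding PP_def using PP_pair_two[OF rd fin, of i j] by simp
  have E1: "i \<in> I \<Longrightarrow> (\<integral>\<omega>. g1 A x (\<omega> i, R i \<omega>) \<partial>PP) = J1 \<mu> n A x" for i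
  proof -
    assume i: "i \<in> I"
    have "(\<integral>\<omega>. g1 A x (\<omega> i, R i \<omega>) \<partial>PP) = (\<integral>z. g1 A x z \<partial>distr PP (borel \<Otimes>\<^sub>M borel) (\<lambda>\<omega>. (\<omega> i, R i \<omega>)))"
      by (rule integral_distr[symmetric]) (use Zm[OF i] in auto)
    also have "\<dots> = J1 \<mu> n A x" using law1[OF i] J1_g[OF rd n2] by simp
    finally show ?thesis .
  qed
  have E2: "i \<in> I \<Longrightarrow> (\<integral>\<omega>. g2 A x (\<omega> i, R i \<omega>) \<partial>PP) = J2 \<mu> n A x" for i
  proof -
    assume i: "i \<in> I"
    have "(\<integral>\<omega>. g2 A x (\<omega> i, R i \<omega>) \<partial>PP) = (\<integral>z. g2 A x z \<partial>distr PP (borel \<Otimes>\<^sub>M borel) (\<lambda>\<omega>. (\<omega> i, R i \<omega>)))"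
      by (rule integral_distr[symmetric]) (use Zm[OF i] in auto)
    also have "\<dots> = J2 \<mu> n A x" using law1[OF i] J2_g[OF rd n2] x2 by simp
    finally show ?thesis .
  qed
  have E3: "i \<in> I \<Longrightarrow> j \<in> I \<Longrightarrow> i \<noteq> j \<Longrightarrow> (\<integral>\<omega>. g2 A x (\<omega> i, \<omega> j) \<partial>PP) = J3 \<mu> A x" for i j
  proof -
    assume i: "i \<in> I" and j: "j \<in> I" and ij: "i \<noteq> j"
    have "(\<integral>\<omega>. g2 A x (\<omega> i, \<omega> j) \<partial>PP) = (\<integral>z. g2 A x z \<partial>distr PP (borel \<Otimes>\<^sub>M borel) (\<lambda>\<omega>. (\<omega> i, \<omega> j)))"
      by (rule integral_distr[symmetric]) (use Zm2[OF i j] in auto)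
    also have "\<dots> = J3 \<mu> A x" using law2[OF i j ij] J3_g[OF rd] x2 by simp
    finally show ?thesis .
  qed
  define T where "T \<omega> = (if (\<Sum>i<n. \<omega> i) > x then 1 else (0::real))" for \<omega>
  have Tm: "T \<in> borel_measurable PP" unfolding T_def using sm[of "{..<n}"] by (simp add: I_def)
  have iT: "integrable PP T" by (rule bint[OF Tm]) (simp add: T_def)
  have ET: "(\<integral>\<omega>. T \<omega> \<partial>PP) = tail (conv_pow \<mu> n) x"
  proof -
    have sm': "(\<lambda>\<omega>. \<Sum>i<n. \<omega> i) \<in> borel_measurable PP" using sm[of "{..<n}"] by (simp add: I_def)
    have "(\<integral>\<omega>. T \<omega> \<partial>PP) = (\<integral>\<omega>. indicator {x<..} (\<Sum>i<n. \<omega> i) \<partial>PP)"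
      by (simp add: T_def indicator_def of_bool_def)
    also have "\<dots> = (\<integral>s. indicator {x<..} s \<partial>distr PP borel (\<lambda>\<omega>. \<Sum>i<n. \<omega> i))"
      by (rule integral_distr[symmetric]) (use sm' in auto)
    also have "distr PP borel (\<lambda>\<omega>. \<Sum>i<n. \<omega> i) = conv_pow \<mu> n"
      unfolding PP_def using PP_sum_law[OF rd fin, of "{..<n}"] n2 by (simp add: I_def lessThan_empty_iff)
    also have "(\<integral>s. indicator {x<..} s \<partial>conv_pow \<mu> n) = tail (conv_pow \<mu> n) x"
      using rd_space[OF rd_conv_pow[OF rd, of n]] n2 by (simp add: tail_def)
    finally show ?thesis .
  qed
  define H where "H \<omega> = (\<Sum>i<n. g1 A x (\<omega> i, R i \<omega>) + g2 A x (\<omega> i, R i \<omega>))" for \<omega>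
  have iH: "integrable PP H" unfolding H_def using i1 i2 by (auto simp: I_def)
  have EH: "(\<integral>\<omega>. H \<omega> \<partial>PP) = real n * (J1 \<mu> n A x + J2 \<mu> n A x)"
  proof -
    have "(\<integral>\<omega>. H \<omega> \<partial>PP) = (\<Sum>i<n. (\<integral>\<omega>. g1 A x (\<omega> i, R i \<omega>) + g2 A x (\<omega> i, R i \<omega>) \<partial>PP))"
      unfolding H_def using i1 i2 by (intro Bochner_Integration.integral_sum) (auto simp: I_def)
    also have "\<dots> = (\<Sum>i<n. J1 \<mu> n A x + J2 \<mu> n A x)"
      using i1 i2 E1 E2 by (intro sum.cong refl) (auto simp: I_def)
    finally show ?thesis by simp
  qed
  define Q where "Q \<omega> = (\<Sum>j<n. \<Sum>i<j. g2 A x (\<omega> i, \<omega> j) + g2 A x (\<omega> i, R i \<omega>))" for \<omega>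
  have iQ: "integrable PP Q" unfolding Q_def
    by (intro Bochner_Integration.integrable_sum Bochner_Integration.integrable_add i2 i3) (auto simp: I_def)
  have EQ: "(\<integral>\<omega>. Q \<omega> \<partial>PP) = real n * (real n - 1) / 2 * (J3 \<mu> A x + J2 \<mu> n A x)"
  proof -
    have "(\<integral>\<omega>. Q \<omega> \<partial>PP) = (\<Sum>j<n. \<integral>\<omega>. (\<Sum>i<j. g2 A x (\<omega> i, \<omega> j) + g2 A x (\<omega> i, R i \<omega>)) \<partial>PP)"
      unfolding Q_def
      by (intro Bochner_Integration.integral_sum Bochner_Integration.integrable_sum Bochner_Integration.integrable_add i2 i3) (auto simp: I_def)
    also have "\<dots> = (\<Sum>j<n. \<Sum>i<j. \<integral>\<omega>. g2 A x (\<omega> i, \<omega> j) + g2 A x (\<omega> i, R i \<omega>) \<partial>PP)"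
      by (intro sum.cong refl Bochner_Integration.integral_sum Bochner_Integration.integrable_add i2 i3) (auto simp: I_def)
    also have "\<dots> = (\<Sum>j<n. \<Sum>i<j. J3 \<mu> A x + J2 \<mu> n A x)"
      using i2 i3 E2 E3 by (intro sum.cong refl) (auto simp: I_def)
    also have "\<dots> = (\<Sum>j<n. real j) * (J3 \<mu> A x + J2 \<mu> n A x)"
      by (simp add: sum_distrib_right)
    finally show ?thesis by (simp add: sum_lessThan_real)
  qed
  have "(\<integral>\<omega>. T \<omega> \<partial>PP) \<le> (\<integral>\<omega>. H \<omega> \<partial>PP)"
    by (rule integral_mono[OF iT iH]) (unfold T_def H_def R_def, rule pw1[OF xA])
  then have ineq1: "tail (conv_pow \<mu> n) x \<le> real n * (J1 \<mu> n A x + J2 \<mu> n A x)" using ET EH by simp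
  have "(\<integral>\<omega>. H \<omega> \<partial>PP) \<le> (\<integral>\<omega>. T \<omega> + Q \<omega> \<partial>PP)"
    by (rule integral_mono[OF iH Bochner_Integration.integrable_add[OF iT iQ]])
       (unfold T_def H_def R_def Q_def, rule pw2[OF x2])
  also have "\<dots> = (\<integral>\<omega>. T \<omega> \<partial>PP) + (\<integral>\<omega>. Q \<omega> \<partial>PP)" by (rule Bochner_Integration.integral_add[OF iT iQ])
  finally have ineq2: "real n * (J1 \<mu> n A x + J2 \<mu> n A x) \<le> tail (conv_pow \<mu> n) x + real n * (real n - 1) / 2 * (J3 \<mu> A x + J2 \<mu> n A x)"
    using ET EH EQ by simp
  have alg: "real n * (real n - 3) / 2 = real n * (real n - 1) / 2 - real n" by (simp add: field_simps)
  have eq: "real n * J1 \<mu> n A x - real n * (real n - 3) / 2 * J2 \<mu> n A x - real n * (real n - 1) / 2 * J3 \<mu> A x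
     = real n * (J1 \<mu> n A x + J2 \<mu> n A x) - real n * (real n - 1) / 2 * (J3 \<mu> A x + J2 \<mu> n A x)"
    by (simp add: field_simps)
  show ?thesis
    using ineq1 ineq2 unfolding eq by (simp add: distrib_left)
qed


lemma rd_finite: "real_distribution M \<Longrightarrow> finite_measure M"
  using rd_prob by (auto simp: prob_space_def)

lemma rd_sigma: "real_distribution M \<Longrightarrow> sigma_finite_measure M"
  using rd_finite by (auto simp: finite_measure_def)

lemma shiftK_nn:
  assumes ra: "real_distribution \<alpha>" and rb: "real_distribution \<beta>"
    and r1: "real_distribution \<tau>1" and r2: "real_distribution \<tau>2"
  shows "emeasure \<tau>1 {-B<..} * emeasure \<tau>2 {-B<..} * (\<integral>\<^sup>+z. ennreal (g2 A x z) \<partial>(\<alpha> \<Otimes>\<^sub>M \<beta>))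
     \<le> (\<integral>\<^sup>+z. ennreal (g2 (A-B) (x-2*B) z) \<partial>(convolution \<alpha> \<tau>1 \<Otimes>\<^sub>M convolution \<beta> \<tau>2))"
proof -
  interpret A: prob_space \<alpha> using ra rd_prob by blast
  interpret B: prob_space \<beta> using rb rd_prob by blast
  interpret T1: prob_space \<tau>1 using r1 rd_prob by blast
  interpret T2: prob_space \<tau>2 using r2 rd_prob by blast
  have P1: "real_distribution (convolution \<alpha> \<tau>1)" using ra r1 by (rule rd_convolution)
  have P2: "real_distribution (convolution \<beta> \<tau>2)" using rb r2 by (rule rd_convolution)
  interpret Q1: prob_space "convolution \<alpha> \<tau>1" using P1 rd_prob by blast
  interpret Q2: prob_space "convolution \<beta> \<tau>2" using P2 rd_prob by blast
  have [measurable_cong]: "sets \<alpha> = sets borel" "sets \<beta> = sets borel" "sets \<tau>1 = sets borel" "sets \<tau>2 = sets borel"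
    using ra rb r1 r2 by (auto simp: rd_sets)
  have [measurable_cong]: "sets (convolution \<alpha> \<tau>1 \<Otimes>\<^sub>M convolution \<beta> \<tau>2) = sets (borel \<Otimes>\<^sub>M borel)"
    by (intro sets_pair_measure_cong) auto
  have [measurable_cong]: "sets (\<alpha> \<Otimes>\<^sub>M \<beta>) = sets (borel \<Otimes>\<^sub>M borel)"
    by (intro sets_pair_measure_cong) (auto simp: ra rb rd_sets)
  define G where "G a b = ennreal (g2 A x (a,b))" for a b
  define G' where "G' u v = ennreal (g2 (A-B) (x-2*B) (u,v))" for u v
  define I where "I t = (indicator {-B<..} t :: ennreal)" for t
  have Gm[measurable]: "(\<lambda>(a,b). G a b) \<in> borel_measurable (borel \<Otimes>\<^sub>M borel)"
    unfolding G_def g2_def by measurable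
  have G'm[measurable]: "(\<lambda>(a,b). G' a b) \<in> borel_measurable (borel \<Otimes>\<^sub>M borel)"
    unfolding G'_def g2_def by measurable
  have Im[measurable]: "I \<in> borel_measurable borel" unfolding I_def by measurable
  have "(\<integral>\<^sup>+z. ennreal (g2 (A-B) (x-2*B) z) \<partial>(convolution \<alpha> \<tau>1 \<Otimes>\<^sub>M convolution \<beta> \<tau>2))
      = (\<integral>\<^sup>+u. \<integral>\<^sup>+v. G' u v \<partial>convolution \<beta> \<tau>2 \<partial>convolution \<alpha> \<tau>1)"
    unfolding G'_def
    by (rule Q2.nn_integral_fst[symmetric]) measurable
  also have "\<dots> = (\<integral>\<^sup>+u. \<integral>\<^sup>+b. \<integral>\<^sup>+s. G' u (b+s) \<partial>\<tau>2 \<partial>\<beta> \<partial>convolution \<alpha> \<tau>1)"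
    by (intro nn_integral_cong nn_integral_convolution) (auto simp: rd_finite rd_sets rb r2)
  also have "\<dots> = (\<integral>\<^sup>+a. \<integral>\<^sup>+t. \<integral>\<^sup>+b. \<integral>\<^sup>+s. G' (a+t) (b+s) \<partial>\<tau>2 \<partial>\<beta> \<partial>\<tau>1 \<partial>\<alpha>)"
    by (rule nn_integral_convolution) (auto simp: rd_finite rd_sets ra r1)
  also have "\<dots> \<ge> (\<integral>\<^sup>+a. \<integral>\<^sup>+t. \<integral>\<^sup>+b. \<integral>\<^sup>+s. (G a b * I t) * I s \<partial>\<tau>2 \<partial>\<beta> \<partial>\<tau>1 \<partial>\<alpha>)"
    by (intro nn_integral_mono) (auto simp: G_def G'_def I_def g2_def indicator_def)
  also have "(\<integral>\<^sup>+a. \<integral>\<^sup>+t. \<integral>\<^sup>+b. \<integral>\<^sup>+s. (G a b * I t) * I s \<partial>\<tau>2 \<partial>\<beta> \<partial>\<tau>1 \<partial>\<alpha>)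
      = (\<integral>\<^sup>+a. \<integral>\<^sup>+t. \<integral>\<^sup>+b. (I t * emeasure \<tau>2 {-B<..}) * G a b \<partial>\<beta> \<partial>\<tau>1 \<partial>\<alpha>)"
    unfolding I_def by (intro nn_integral_cong, subst nn_integral_cmult_indicator) (auto simp: mult_ac rd_sets r1 r2)
  also have "\<dots> = (\<integral>\<^sup>+a. \<integral>\<^sup>+t. (emeasure \<tau>2 {-B<..} * (\<integral>\<^sup>+b. G a b \<partial>\<beta>)) * I t \<partial>\<tau>1 \<partial>\<alpha>)"
    by (intro nn_integral_cong, subst nn_integral_cmult) (auto simp: mult_ac)
  also have "\<dots> = (\<integral>\<^sup>+a. (emeasure \<tau>1 {-B<..} * emeasure \<tau>2 {-B<..}) * (\<integral>\<^sup>+b. G a b \<partial>\<beta>) \<partial>\<alpha>)"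
    unfolding I_def by (intro nn_integral_cong, subst nn_integral_cmult_indicator) (auto simp: mult_ac rd_sets r1 r2)
  also have "\<dots> = (emeasure \<tau>1 {-B<..} * emeasure \<tau>2 {-B<..}) * (\<integral>\<^sup>+a. \<integral>\<^sup>+b. G a b \<partial>\<beta> \<partial>\<alpha>)"
    by (rule nn_integral_cmult) measurable
  also have "(\<integral>\<^sup>+a. \<integral>\<^sup>+b. G a b \<partial>\<beta> \<partial>\<alpha>) = (\<integral>\<^sup>+z. ennreal (g2 A x z) \<partial>(\<alpha> \<Otimes>\<^sub>M \<beta>))"
    unfolding G_def by (rule B.nn_integral_fst) measurable
  finally show ?thesis by simp
qed


lemma meas_pair_rd:
  fixes f :: "real \<times> real \<Rightarrow> real"
  assumes "real_distribution \<alpha>" "real_distribution \<beta>" "f \<in> borel_measurable (borel \<Otimes>\<^sub>M borel)"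
  shows "f \<in> borel_measurable (\<alpha> \<Otimes>\<^sub>M \<beta>)"
proof -
  have "measurable (\<alpha> \<Otimes>\<^sub>M \<beta>) (borel :: real measure) = measurable (borel \<Otimes>\<^sub>M borel) borel"
    by (rule measurable_cong_sets) (auto intro!: sets_pair_measure_cong simp: rd_sets assms(1,2))
  with assms(3) show ?thesis by simp
qed

lemma shiftK:
  assumes ra: "real_distribution \<alpha>" and rb: "real_distribution \<beta>"
    and r1: "real_distribution \<tau>1" and r2: "real_distribution \<tau>2"
  shows "tail \<tau>1 (-B) * tail \<tau>2 (-B) * (\<integral>z. g2 A x z \<partial>(\<alpha> \<Otimes>\<^sub>M \<beta>))
     \<le> (\<integral>z. g2 (A-B) (x-2*B) z \<partial>(convolution \<alpha> \<tau>1 \<Otimes>\<^sub>M convolution \<beta> \<tau>2))"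
proof -
  have P1: "real_distribution (convolution \<alpha> \<tau>1)" using ra r1 by (rule rd_convolution)
  have P2: "real_distribution (convolution \<beta> \<tau>2)" using rb r2 by (rule rd_convolution)
  have pp: "prob_space (convolution \<alpha> \<tau>1 \<Otimes>\<^sub>M convolution \<beta> \<tau>2)"
    using P1 P2 by (intro prob_space_pair) (auto simp: rd_prob)
  have int1: "(\<integral>z. g2 A x z \<partial>(\<alpha> \<Otimes>\<^sub>M \<beta>)) = enn2real (\<integral>\<^sup>+z. ennreal (g2 A x z) \<partial>(\<alpha> \<Otimes>\<^sub>M \<beta>))"
    by (rule integral_eq_nn_integral) (auto intro: meas_pair_rd ra rb simp: g_nonneg)
  have int2: "(\<integral>z. g2 (A-B) (x-2*B) z \<partial>(convolution \<alpha> \<tau>1 \<Otimes>\<^sub>M convolution \<beta> \<tau>2))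
     = enn2real (\<integral>\<^sup>+z. ennreal (g2 (A-B) (x-2*B) z) \<partial>(convolution \<alpha> \<tau>1 \<Otimes>\<^sub>M convolution \<beta> \<tau>2))"
    by (rule integral_eq_nn_integral) (auto intro: meas_pair_rd P1 P2 simp: g_nonneg)
  have fin: "(\<integral>\<^sup>+z. ennreal (g2 (A-B) (x-2*B) z) \<partial>(convolution \<alpha> \<tau>1 \<Otimes>\<^sub>M convolution \<beta> \<tau>2)) < top"
  proof -
    have "(\<integral>\<^sup>+z. ennreal (g2 (A-B) (x-2*B) z) \<partial>(convolution \<alpha> \<tau>1 \<Otimes>\<^sub>M convolution \<beta> \<tau>2))
        \<le> (\<integral>\<^sup>+z. 1 \<partial>(convolution \<alpha> \<tau>1 \<Otimes>\<^sub>M convolution \<beta> \<tau>2))"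
      by (intro nn_integral_mono) (auto simp: g2_def)
    also have "\<dots> = 1" using prob_space.emeasure_space_1[OF pp] by simp
    finally show ?thesis by (simp add: order_le_less_trans)
  qed
  have e1: "enn2real (emeasure \<tau>1 {-B<..}) = tail \<tau>1 (-B)" by (simp add: tail_def measure_def)
  have e2: "enn2real (emeasure \<tau>2 {-B<..}) = tail \<tau>2 (-B)" by (simp add: tail_def measure_def)
  have "enn2real (emeasure \<tau>1 {-B<..} * emeasure \<tau>2 {-B<..} * (\<integral>\<^sup>+z. ennreal (g2 A x z) \<partial>(\<alpha> \<Otimes>\<^sub>M \<beta>)))
      \<le> enn2real (\<integral>\<^sup>+z. ennreal (g2 (A-B) (x-2*B) z) \<partial>(convolution \<alpha> \<tau>1 \<Otimes>\<^sub>M convolution \<beta> \<tau>2))"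
    by (rule enn2real_mono[OF shiftK_nn[OF ra rb r1 r2] fin])
  then show ?thesis unfolding int1 int2 enn2real_mult e1 e2 .
qed

lemma tail_pos_exists:
  assumes rd: "real_distribution \<nu>" shows "\<exists>y. tail \<nu> y > 0"
proof (rule ccontr)
  assume nz: "\<not> (\<exists>y. tail \<nu> y > 0)"
  have z: "tail \<nu> y = 0" for y
  proof -
    have "\<not> tail \<nu> y > 0" using nz by blast
    then show ?thesis using tail_nonneg[of \<nu> y] by linarith
  qed
  interpret prob_space \<nu> using rd rd_prob by blast
  have "(\<lambda>i. measure \<nu> {- real i<..}) \<longlonglongrightarrow> measure \<nu> (\<Union>i. {- real i<..})"
    by (rule finite_Lim_measure_incseq) (auto simp: incseq_def rd_sets[OF rd])
  moreover have "(\<Union>i. {- real i<..}) = UNIV"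
  proof -
    have "t \<in> (\<Union>i. {- real i<..})" for t :: real
    proof -
      obtain i :: nat where "real i > - t" using reals_Archimedean2 by blast
      then have "t \<in> {- real i<..}" by simp
      then show ?thesis by blast
    qed
    then show ?thesis by auto
  qed
  ultimately have "(\<lambda>i. 0) \<longlonglongrightarrow> measure \<nu> UNIV" using z by (simp add: tail_def)
  then have "measure \<nu> UNIV = 0" using LIMSEQ_unique tendsto_const by blast
  moreover have "measure \<nu> UNIV = 1" using prob_space rd_space[OF rd] by simp
  ultimately show False by simp
qed

lemma conv_pow_n: "n \<ge> 2 \<Longrightarrow> conv_pow \<mu> n = convolution \<mu> (conv_pow \<mu> (n - 1))"
  using conv_pow_Suc[of "n - 1" \<mu>] by (simp add: Suc_diff_1)

lemma J3_shift:
  assumes rd: "real_distribution \<mu>" and n2: "n \<ge> 2" and x: "2 * A \<le> x"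
  shows "tail (conv_pow \<mu> (n-1)) (-B) * tail (conv_pow \<mu> (n-1)) (-B) * J3 \<mu> A x
     \<le> (\<integral>z. g2 (A-B) (x-2*B) z \<partial>(conv_pow \<mu> n \<Otimes>\<^sub>M conv_pow \<mu> n))"
proof -
  have rW: "real_distribution (conv_pow \<mu> (n-1))" using rd n2 by (intro rd_conv_pow) auto
  show ?thesis
    using shiftK[OF rd rd rW rW, of B A x] J3_g[OF rd x] conv_pow_n[OF n2, of \<mu>] by simp
qed

lemma J2_shift:
  assumes rd: "real_distribution \<mu>" and n2: "n \<ge> 2" and x: "2 * A \<le> x"
  shows "tail (conv_pow \<mu> (n-1)) (-B) * tail \<mu> (-B) * J2 \<mu> n A x
     \<le> (\<integral>z. g2 (A-B) (x-2*B) z \<partial>(conv_pow \<mu> n \<Otimes>\<^sub>M conv_pow \<mu> n))"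
proof -
  have rW: "real_distribution (conv_pow \<mu> (n-1))" using rd n2 by (intro rd_conv_pow) auto
  have comm: "convolution (conv_pow \<mu> (n-1)) \<mu> = convolution \<mu> (conv_pow \<mu> (n-1))"
    by (rule convolution_commutative) (use rW rd in \<open>auto simp: rd_finite rd_sets\<close>)
  show ?thesis
    using shiftK[OF rd rW rW rd, of B A x] J2_g[OF rd n2 x] conv_pow_n[OF n2, of \<mu>] comm by simp
qed


lemma bint_pair:
  fixes f :: "real \<times> real \<Rightarrow> real"
  assumes "real_distribution \<alpha>" "real_distribution \<beta>"
    and f: "f \<in> borel_measurable (borel \<Otimes>\<^sub>M borel)" and b: "\<And>z. \<bar>f z\<bar> \<le> 1"
  shows "integrable (\<alpha> \<Otimes>\<^sub>M \<beta>) f"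
proof -
  interpret A: prob_space \<alpha> using assms rd_prob by blast
  interpret B: prob_space \<beta> using assms rd_prob by blast
  interpret pair_prob_space \<alpha> \<beta> ..
  show ?thesis
    by (rule P.integrable_const_bound[where B=1]) (use meas_pair_rd[OF assms(1,2) f] b in auto)
qed

lemma K_asym:
  fixes \<rho> :: "real measure"
  assumes rd: "real_distribution \<rho>" and S: "class_S \<gamma> \<rho>"
  shows "\<forall>\<delta>>0. \<exists>A0. \<forall>A\<ge>A0. eventually (\<lambda>x. (\<integral>z. g2 A x z \<partial>(\<rho> \<Otimes>\<^sub>M \<rho>)) \<le> \<delta> * tail \<rho> x) at_top"
proof -
  interpret prob_space \<rho> using rd rd_prob by blast
  have [measurable_cong]: "sets \<rho> = sets borel" using rd by (rule rd_sets)
  note tm[measurable] = tail_meas[OF rd]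
  have tpos: "\<And>x. tail \<rho> x > 0"
    and Llim: "\<And>a. ((\<lambda>x. tail \<rho> (x + a) / tail \<rho> x) \<longlongrightarrow> exp (- \<gamma> * a)) at_top"
    and mfin: "mgf \<rho> \<gamma> < \<infinity>"
    and S2: "((\<lambda>x. tail (conv_pow \<rho> 2) x / tail \<rho> x) \<longlongrightarrow> 2 * enn2real (mgf \<rho> \<gamma>)) at_top"
    using S by (auto simp: class_S_def class_L_def)
  define m where "m = enn2real (mgf \<rho> \<gamma>)"
  have em: "(\<lambda>v. exp (\<gamma> * v)) \<in> borel_measurable \<rho>" by measurable
  have ie: "integrable \<rho> (\<lambda>v. exp (\<gamma> * v))"
    using em mfin by (simp add: integrable_iff_bounded mgf_def)
  have meq: "m = (\<integral>v. exp (\<gamma> * v) \<partial>\<rho>)"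
    using integral_eq_nn_integral[OF em] by (simp add: m_def mgf_def)
  define mA where "mA A = (\<integral>v. indicator {..A} v * exp (\<gamma> * v) \<partial>\<rho>)" for A
  have mA_lim: "(mA \<longlongrightarrow> m) at_top"
  proof -
    have "((\<lambda>A. \<integral>v. indicator {..A} v * exp (\<gamma> * v) \<partial>\<rho>) \<longlongrightarrow> (\<integral>v. exp (\<gamma> * v) \<partial>\<rho>)) at_top"
    proof (rule integral_dominated_convergence_at_top[where w="\<lambda>v. exp (\<gamma> * v)"])
      show "(\<lambda>v. exp (\<gamma> * v)) \<in> borel_measurable \<rho>" by measurable
      show "\<And>A. (\<lambda>v. indicator {..A} v * exp (\<gamma> * v)) \<in> borel_measurable \<rho>" by measurable
      show "integrable \<rho> (\<lambda>v. exp (\<gamma> * v))" by (rule ie)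
      show "AE v in \<rho>. ((\<lambda>A. indicator {..A} v * exp (\<gamma> * v)) \<longlongrightarrow> exp (\<gamma> * v)) at_top"
      proof (rule AE_I2)
        fix v
        have "eventually (\<lambda>A. indicator {..A} v * exp (\<gamma> * v) = exp (\<gamma> * v)) at_top"
          using eventually_ge_at_top[of v] by eventually_elim (simp add: indicator_def)
        then show "((\<lambda>A. indicator {..A} v * exp (\<gamma> * v)) \<longlongrightarrow> exp (\<gamma> * v)) at_top"
          by (rule tendsto_eventually)
      qed
      show "\<forall>\<^sub>F A in at_top. AE v in \<rho>. norm (indicator {..A} v * exp (\<gamma> * v)) \<le> exp (\<gamma> * v)"
        by (intro always_eventually allI AE_I2) (simp add: indicator_def)
    qed
    then show ?thesis unfolding meq mA_def[abs_def] .
  qed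
  define Lf where "Lf A x = (\<integral>v. indicator {..A} v * tail \<rho> (x - v) \<partial>\<rho>)" for A x
  have L_lim: "((\<lambda>x. Lf A x / tail \<rho> x) \<longlongrightarrow> mA A) at_top" for A
  proof -
    have ev: "eventually (\<lambda>x. tail \<rho> (x - A) / tail \<rho> x < exp (\<gamma> * A) + 1) at_top"
    proof -
      have "((\<lambda>x. tail \<rho> (x + - A) / tail \<rho> x) \<longlongrightarrow> exp (- \<gamma> * - A)) at_top" by (rule Llim)
      then have "((\<lambda>x. tail \<rho> (x - A) / tail \<rho> x) \<longlongrightarrow> exp (\<gamma> * A)) at_top" by simp
      then show ?thesis by (rule order_tendstoD) simp
    qed
    have "((\<lambda>x. \<integral>v. indicator {..A} v * (tail \<rho> (x - v) / tail \<rho> x) \<partial>\<rho>) \<longlongrightarrow> (\<integral>v. indicator {..A} v * exp (\<gamma> * v) \<partial>\<rho>)) at_top"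
    proof (rule integral_dominated_convergence_at_top[where w="\<lambda>v. exp (\<gamma> * A) + 1"])
      show "(\<lambda>v. indicator {..A} v * exp (\<gamma> * v)) \<in> borel_measurable \<rho>" by measurable
      show "\<And>x. (\<lambda>v. indicator {..A} v * (tail \<rho> (x - v) / tail \<rho> x)) \<in> borel_measurable \<rho>" by measurable
      show "integrable \<rho> (\<lambda>v. exp (\<gamma> * A) + 1)" by auto
      show "AE v in \<rho>. ((\<lambda>x. indicator {..A} v * (tail \<rho> (x - v) / tail \<rho> x)) \<longlongrightarrow> indicator {..A} v * exp (\<gamma> * v)) at_top"
      proof (rule AE_I2)
        fix v
        have "((\<lambda>x. tail \<rho> (x + - v) / tail \<rho> x) \<longlongrightarrow> exp (- \<gamma> * - v)) at_top" by (rule Llim)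
        then have "((\<lambda>x. tail \<rho> (x - v) / tail \<rho> x) \<longlongrightarrow> exp (\<gamma> * v)) at_top" by simp
        then show "((\<lambda>x. indicator {..A} v * (tail \<rho> (x - v) / tail \<rho> x)) \<longlongrightarrow> indicator {..A} v * exp (\<gamma> * v)) at_top"
          by (rule tendsto_mult_left)
      qed
      show "\<forall>\<^sub>F x in at_top. AE v in \<rho>. norm (indicator {..A} v * (tail \<rho> (x - v) / tail \<rho> x)) \<le> exp (\<gamma> * A) + 1"
        using ev
      proof eventually_elim
        case (elim x)
        show ?case
        proof (rule AE_I2)
          fix v
          show "norm (indicator {..A} v * (tail \<rho> (x - v) / tail \<rho> x)) \<le> exp (\<gamma> * A) + 1"
          proof (cases "v \<le> A")
            case True
            have "tail \<rho> (x - v) \<le> tail \<rho> (x - A)" using True by (intro tail_mono[OF rd]) simp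
            then have "tail \<rho> (x - v) / tail \<rho> x \<le> tail \<rho> (x - A) / tail \<rho> x"
              using tpos[of x] by (intro divide_right_mono) auto
            moreover have "0 \<le> tail \<rho> (x - v) / tail \<rho> x" using tpos[of x] tail_nonneg[of \<rho> "x-v"] by simp
            ultimately show ?thesis using True elim by (simp add: indicator_def)
          next
            case False
            have "0 \<le> exp (\<gamma> * A) + 1" by (simp add: add_nonneg_nonneg)
            then show ?thesis using False by (simp add: indicator_def)
          qed
        qed
      qed
    qed
    moreover have "(\<integral>v. indicator {..A} v * (tail \<rho> (x - v) / tail \<rho> x) \<partial>\<rho>) = Lf A x / tail \<rho> x" for x
      by (simp add: Lf_def times_divide_eq_right)
    ultimately show ?thesis by (simp add: mA_def Lf_def)
  qed
  have conv2: "conv_pow \<rho> 2 = convolution \<rho> \<rho>" by (simp add: numeral_2_eq_2)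
  have dec: "tail (conv_pow \<rho> 2) x = (\<integral>z. g2 A x z \<partial>(\<rho> \<Otimes>\<^sub>M \<rho>)) + 2 * Lf A x" if x2: "2 * A < x" for A x
  proof -
    interpret pp: pair_prob_space \<rho> \<rho> ..
    have [measurable_cong]: "sets (\<rho> \<Otimes>\<^sub>M \<rho>) = sets (borel \<Otimes>\<^sub>M borel)"
      by (intro sets_pair_measure_cong) (auto simp: rd_sets rd)
    have i1: "integrable (\<rho> \<Otimes>\<^sub>M \<rho>) (g1 A x)" by (rule bint_pair[OF rd rd]) (auto simp: g1_def)
    have i2: "integrable (\<rho> \<Otimes>\<^sub>M \<rho>) (g2 A x)" by (rule bint_pair[OF rd rd]) (auto simp: g2_def)
    have i3: "integrable (\<rho> \<Otimes>\<^sub>M \<rho>) (\<lambda>z. g1 A x (snd z, fst z))" by (rule bint_pair[OF rd rd]) (auto simp: g1_def)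
    have "tail (conv_pow \<rho> 2) x = (\<integral>s. indicator {x<..} s \<partial>(convolution \<rho> \<rho>))"
      using rd_space[OF rd_convolution[OF rd rd]] by (simp add: conv2 tail_def)
    also have "\<dots> = (\<integral>z. indicator {x<..} (fst z + snd z) \<partial>(\<rho> \<Otimes>\<^sub>M \<rho>))"
      unfolding convolution_def by (subst integral_distr) (auto simp: case_prod_beta)
    also have "\<dots> = (\<integral>z. g2 A x z + g1 A x z + g1 A x (snd z, fst z) \<partial>(\<rho> \<Otimes>\<^sub>M \<rho>))"
      using x2 by (intro Bochner_Integration.integral_cong refl) (auto simp: indicator_def g1_def g2_def)
    also have "\<dots> = (\<integral>z. g2 A x z \<partial>(\<rho> \<Otimes>\<^sub>M \<rho>)) + (\<integral>z. g1 A x z \<partial>(\<rho> \<Otimes>\<^sub>M \<rho>)) + (\<integral>z. g1 A x (snd z, fst z) \<partial>(\<rho> \<Otimes>\<^sub>M \<rho>))"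
      using i1 i2 i3 by (simp add: Bochner_Integration.integral_add)
    also have "(\<integral>z. g1 A x (snd z, fst z) \<partial>(\<rho> \<Otimes>\<^sub>M \<rho>)) = (\<integral>z. g1 A x z \<partial>(\<rho> \<Otimes>\<^sub>M \<rho>))"
      using pp.integral_product_swap[of "g1 A x"] by (simp add: case_prod_unfold)
    also have "(\<integral>z. g1 A x z \<partial>(\<rho> \<Otimes>\<^sub>M \<rho>)) = Lf A x"
      using J1_eq[OF rd rd, of A x] by (simp add: set_lebesgue_integral_def Lf_def)
    finally show ?thesis by simp
  qed
  show ?thesis
  proof (intro allI impI)
    fix \<delta> :: real assume \<delta>: "\<delta> > 0"
    have "eventually (\<lambda>A. m - \<delta>/4 < mA A) at_top" using mA_lim \<delta> by (intro order_tendstoD(1)) auto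
    then obtain A0 where A0: "\<And>A. A \<ge> A0 \<Longrightarrow> m - \<delta>/4 < mA A" by (auto simp: eventually_at_top_linorder)
    show "\<exists>A0. \<forall>A\<ge>A0. eventually (\<lambda>x. (\<integral>z. g2 A x z \<partial>(\<rho> \<Otimes>\<^sub>M \<rho>)) \<le> \<delta> * tail \<rho> x) at_top"
    proof (intro exI allI impI)
      fix A assume "A \<ge> A0"
      then have mAA: "m - \<delta>/4 < mA A" by (rule A0)
      have lim: "((\<lambda>x. tail (conv_pow \<rho> 2) x / tail \<rho> x - 2 * (Lf A x / tail \<rho> x)) \<longlongrightarrow> 2 * m - 2 * mA A) at_top"
        using S2 L_lim[of A] unfolding m_def by (intro tendsto_intros) auto
      have "eventually (\<lambda>x. tail (conv_pow \<rho> 2) x / tail \<rho> x - 2 * (Lf A x / tail \<rho> x) < \<delta>) at_top"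
      proof -
        have "2 * m - 2 * mA A < \<delta>" using mAA \<delta> by linarith
        from order_tendstoD(2)[OF lim this] show ?thesis .
      qed
      moreover have "eventually (\<lambda>x. 2 * A < x) at_top" by (rule eventually_gt_at_top)
      ultimately show "eventually (\<lambda>x. (\<integral>z. g2 A x z \<partial>(\<rho> \<Otimes>\<^sub>M \<rho>)) \<le> \<delta> * tail \<rho> x) at_top"
      proof eventually_elim
        case (elim x)
        have t: "tail \<rho> x > 0" by (rule tpos)
        have "(\<integral>z. g2 A x z \<partial>(\<rho> \<Otimes>\<^sub>M \<rho>)) = tail (conv_pow \<rho> 2) x - 2 * Lf A x" using dec[OF elim(2)] by simp
        also have "\<dots> = (tail (conv_pow \<rho> 2) x / tail \<rho> x - 2 * (Lf A x / tail \<rho> x)) * tail \<rho> x"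
          using t by (simp add: field_simps)
        also have "\<dots> \<le> \<delta> * tail \<rho> x" using elim(1) t by (intro mult_right_mono) auto
        finally show ?case .
      qed
    qed
  qed
qed


lemma J2_nonneg: "real_distribution \<mu> \<Longrightarrow> n \<ge> 2 \<Longrightarrow> 0 \<le> J2 \<mu> n A x"
  unfolding J2_def set_lebesgue_integral_def
  by (intro add_nonneg_nonneg mult_nonneg_nonneg integral_nonneg tail_nonneg) (auto simp: indicator_def tail_nonneg)

lemma J3_nonneg: "0 \<le> J3 \<mu> A x"
  unfolding J3_def set_lebesgue_integral_def
  by (intro add_nonneg_nonneg mult_nonneg_nonneg integral_nonneg tail_nonneg) (auto simp: indicator_def tail_nonneg)

lemma MC:
  assumes rd: "real_distribution \<mu>" and n2: "n \<ge> 2" and S: "class_S \<gamma> (conv_pow \<mu> n)"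
  shows "\<forall>\<epsilon>>0. \<exists>A0. \<forall>A\<ge>A0. eventually (\<lambda>x. J2 \<mu> n A x + J3 \<mu> A x \<le> \<epsilon> * tail (conv_pow \<mu> n) x) at_top"
proof (intro allI impI)
  fix \<epsilon> :: real assume \<epsilon>: "\<epsilon> > 0"
  define \<rho> where "\<rho> = conv_pow \<mu> n"
  define W where "W = conv_pow \<mu> (n-1)"
  have r\<rho>: "real_distribution \<rho>" unfolding \<rho>_def using rd n2 by (intro rd_conv_pow) auto
  have rW: "real_distribution W" unfolding W_def using rd n2 by (intro rd_conv_pow) auto
  have S': "class_S \<gamma> \<rho>" using S by (simp add: \<rho>_def)
  have tpos: "\<And>x. tail \<rho> x > 0"
    and Llim: "\<And>a. ((\<lambda>x. tail \<rho> (x + a) / tail \<rho> x) \<longlongrightarrow> exp (- \<gamma> * a)) at_top"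
    using S' by (auto simp: class_S_def class_L_def)
  obtain y1 where y1: "tail W y1 > 0" using tail_pos_exists[OF rW] by blast
  obtain y2 where y2: "tail \<mu> y2 > 0" using tail_pos_exists[OF rd] by blast
  define B where "B = - min y1 y2"
  define cW where "cW = tail W (-B)"
  define cm where "cm = tail \<mu> (-B)"
  have cWp: "cW > 0" using y1 tail_mono[OF rW, of "-B" y1] by (simp add: B_def cW_def)
  have cmp: "cm > 0" using y2 tail_mono[OF rd, of "-B" y2] by (simp add: B_def cm_def)
  define D where "D = exp (- \<gamma> * - (2 * B)) + 1"
  have Dp: "D > 0" by (simp add: D_def add_pos_pos)
  have evD: "eventually (\<lambda>x. tail \<rho> (x - 2*B) \<le> D * tail \<rho> x) at_top"
  proof -
    have "((\<lambda>x. tail \<rho> (x + - (2*B)) / tail \<rho> x) \<longlongrightarrow> exp (- \<gamma> * - (2*B))) at_top" by (rule Llim)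
    then have "eventually (\<lambda>x. tail \<rho> (x + - (2*B)) / tail \<rho> x < D) at_top"
      by (rule order_tendstoD) (simp add: D_def)
    then show ?thesis
    proof eventually_elim
      case (elim x)
      then have "tail \<rho> (x - 2*B) < D * tail \<rho> x" using tpos[of x] by (simp add: divide_less_eq)
      then show ?case by simp
    qed
  qed
  define Q where "Q = 1 / (cW * cW) + 1 / (cW * cm)"
  have Qp: "Q > 0" using cWp cmp by (simp add: Q_def add_pos_pos)
  define \<delta> where "\<delta> = \<epsilon> / (D * Q)"
  have \<delta>p: "\<delta> > 0" using \<epsilon> Dp Qp by (simp add: \<delta>_def)
  obtain A0 where A0: "\<And>A. A \<ge> A0 \<Longrightarrow> eventually (\<lambda>x. (\<integral>z. g2 A x z \<partial>(\<rho> \<Otimes>\<^sub>M \<rho>)) \<le> \<delta> * tail \<rho> x) at_top"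
    using K_asym[OF r\<rho> S'] \<delta>p by blast
  show "\<exists>A0. \<forall>A\<ge>A0. eventually (\<lambda>x. J2 \<mu> n A x + J3 \<mu> A x \<le> \<epsilon> * tail (conv_pow \<mu> n) x) at_top"
  proof (intro exI[of _ "A0 + B"] allI impI)
    fix A assume A: "A \<ge> A0 + B"
    have "eventually (\<lambda>x'. (\<integral>z. g2 (A-B) x' z \<partial>(\<rho> \<Otimes>\<^sub>M \<rho>)) \<le> \<delta> * tail \<rho> x') at_top"
      using A by (intro A0) simp
    then obtain X1 where X1: "\<And>x'. x' \<ge> X1 \<Longrightarrow> (\<integral>z. g2 (A-B) x' z \<partial>(\<rho> \<Otimes>\<^sub>M \<rho>)) \<le> \<delta> * tail \<rho> x'"
      by (auto simp: eventually_at_top_linorder)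
    have ev1: "eventually (\<lambda>x. x - 2*B \<ge> X1) at_top"
      using eventually_ge_at_top[of "X1 + 2*B"] by eventually_elim simp
    show "eventually (\<lambda>x. J2 \<mu> n A x + J3 \<mu> A x \<le> \<epsilon> * tail (conv_pow \<mu> n) x) at_top"
      using ev1 evD eventually_ge_at_top[of "2*A"]
    proof eventually_elim
      case (elim x)
      define K where "K = (\<integral>z. g2 (A-B) (x-2*B) z \<partial>(\<rho> \<Otimes>\<^sub>M \<rho>))"
      define K' where "K' = \<delta> * (D * tail \<rho> x)"
      have "K \<le> \<delta> * tail \<rho> (x - 2*B)" unfolding K_def by (rule X1[OF elim(1)])
      also have "\<dots> \<le> K'" unfolding K'_def using elim(2) \<delta>p by (intro mult_left_mono) auto
      finally have K1: "K \<le> K'" .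
      have s3: "cW * cW * J3 \<mu> A x \<le> K"
        using J3_shift[OF rd n2 elim(3), of B] unfolding cW_def W_def K_def \<rho>_def .
      have s2: "cW * cm * J2 \<mu> n A x \<le> K"
        using J2_shift[OF rd n2 elim(3), of B] unfolding cW_def cm_def W_def K_def \<rho>_def .
      have b3: "J3 \<mu> A x \<le> K' / (cW * cW)"
        using s3 K1 cWp by (subst pos_le_divide_eq) (auto simp: mult.commute)
      have b2: "J2 \<mu> n A x \<le> K' / (cW * cm)"
        using s2 K1 cWp cmp by (subst pos_le_divide_eq) (auto simp: mult.commute)
      have "K' / (cW * cW) + K' / (cW * cm) = K' * Q" by (simp add: Q_def distrib_left)
      also have "\<dots> = \<epsilon> * tail \<rho> x" using Dp Qp by (simp add: K'_def \<delta>_def field_simps)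
      finally show ?case using b2 b3 by (simp add: \<rho>_def)
    qed
  qed
qed

lemma ratio_bound:
  fixes a b c t N e :: real
  assumes t: "t > 0" and N: "N \<ge> 2" and b: "b \<ge> 0" and c: "c \<ge> 0"
    and h1: "t \<le> N*a + N*b" and h2: "N*a - N*(N-3)/2*b - N*(N-1)/2*c \<le> t"
    and hu: "b + c \<le> e * t"
  shows "\<bar>N*a/t - 1\<bar> \<le> N*N*e"
proof -
  have et: "0 \<le> e * t" using hu b c by linarith
  have N0: "N \<ge> 0" using N by simp
  have NN: "N \<le> N*N" using N by (simp add: mult_le_cancel_left1)
  have lo: "- (N*N*(e*t)) \<le> N*a - t"
  proof -
    have "N*b \<le> N*(b+c)" using N0 c by (intro mult_left_mono) auto
    also have "\<dots> \<le> N*(e*t)" using N0 hu by (intro mult_left_mono) auto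
    also have "\<dots> \<le> N*N*(e*t)" using NN et by (intro mult_right_mono) auto
    finally show ?thesis using h1 by linarith
  qed
  have hi: "N*a - t \<le> N*N*(e*t)"
  proof -
    have c1: "N*(N-3)/2 \<le> N*N" using N0 by (simp add: field_simps; smt (verit) N mult_le_cancel_left1 mult_nonneg_nonneg)
    have c2: "N*(N-1)/2 \<le> N*N" using N0 by (simp add: field_simps; smt (verit) N mult_le_cancel_left1 mult_nonneg_nonneg)
    have "N*(N-3)/2*b \<le> N*N*b" using c1 b by (intro mult_right_mono) auto
    moreover have "N*(N-1)/2*c \<le> N*N*c" using c2 c by (intro mult_right_mono) auto
    moreover have "N*N*(b+c) \<le> N*N*(e*t)" using hu N0 by (intro mult_left_mono) auto
    ultimately show ?thesis using h2 by (simp add: distrib_left)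
  qed
  have ab: "\<bar>N*a - t\<bar> \<le> N*N*e*t" using lo hi by (simp add: abs_le_iff mult.assoc)
  have eq: "N*a/t - 1 = (N*a - t)/t" using t by (simp add: field_simps)
  have "\<bar>N*a/t - 1\<bar> = \<bar>N*a - t\<bar> / t" unfolding eq using t by (simp add: abs_divide)
  also have "\<dots> \<le> N*N*e*t / t" using ab t by (intro divide_right_mono) auto
  also have "\<dots> = N*N*e" using t by simp
  finally show ?thesis .
qed

lemma lim_bounds:
  fixes f :: "real \<Rightarrow> real \<Rightarrow> real"
  assumes H: "\<forall>\<epsilon>>0. \<exists>A0. \<forall>A\<ge>A0. eventually (\<lambda>x. \<bar>f A x - c\<bar> \<le> \<epsilon>) at_top"
  shows "((\<lambda>A. Limsup at_top (\<lambda>x. ereal (f A x))) \<longlongrightarrow> ereal c) at_top \<and>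
         ((\<lambda>A. Liminf at_top (\<lambda>x. ereal (f A x))) \<longlongrightarrow> ereal c) at_top"
proof -
  have key: "eventually (\<lambda>A. ereal (c - \<epsilon>) \<le> Liminf at_top (\<lambda>x. ereal (f A x)) \<and>
       Limsup at_top (\<lambda>x. ereal (f A x)) \<le> ereal (c + \<epsilon>)) at_top" if e: "\<epsilon> > 0" for \<epsilon>
  proof -
    obtain A0 where A0: "\<And>A. A \<ge> A0 \<Longrightarrow> eventually (\<lambda>x. \<bar>f A x - c\<bar> \<le> \<epsilon>) at_top" using H e by blast
    show ?thesis
    proof (rule eventually_at_top_linorderI[of A0])
      fix A assume "A \<ge> A0"
      then have ev: "eventually (\<lambda>x. \<bar>f A x - c\<bar> \<le> \<epsilon>) at_top" by (rule A0)
      have "ereal (c - \<epsilon>) \<le> Liminf at_top (\<lambda>x. ereal (f A x))"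
        by (rule Liminf_bounded) (use ev in \<open>eventually_elim, simp add: abs_le_iff\<close>)
      moreover have "Limsup at_top (\<lambda>x. ereal (f A x)) \<le> ereal (c + \<epsilon>)"
        by (rule Limsup_bounded) (use ev in \<open>eventually_elim, simp add: abs_le_iff\<close>)
      ultimately show "ereal (c - \<epsilon>) \<le> Liminf at_top (\<lambda>x. ereal (f A x)) \<and>
         Limsup at_top (\<lambda>x. ereal (f A x)) \<le> ereal (c + \<epsilon>)" by simp
    qed
  qed
  have LL: "Liminf at_top (\<lambda>x. ereal (f A x)) \<le> Limsup at_top (\<lambda>x. ereal (f A x))" for A
    by (rule Liminf_le_Limsup) simp
  have lower: "eventually (\<lambda>A. a < Liminf at_top (\<lambda>x. ereal (f A x))) at_top" if lt: "a < ereal c" for a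
  proof -
    obtain r where r: "a < ereal r" "ereal r < ereal c" using ereal_dense2[OF lt] by blast
    have "(c - r) / 2 > 0" using r by simp
    from key[OF this] show ?thesis
    proof eventually_elim
      case (elim A)
      have "ereal r < ereal (c - (c - r) / 2)" using r(2) by (simp add: field_simps)
      then have "a < ereal (c - (c - r) / 2)" using r(1) by (rule order_less_trans[rotated])
      then show ?case using elim by (meson less_le_trans)
    qed
  qed
  have upper: "eventually (\<lambda>A. Limsup at_top (\<lambda>x. ereal (f A x)) < a) at_top" if lt: "ereal c < a" for a
  proof -
    obtain r where r: "ereal c < ereal r" "ereal r < a" using ereal_dense2[OF lt] by blast
    have "(r - c) / 2 > 0" using r by simp
    from key[OF this] show ?thesis
    proof eventually_elim
      case (elim A)
      have "ereal (c + (r - c) / 2) < ereal r" using r(1) by (simp add: field_simps)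
      then have "ereal (c + (r - c) / 2) < a" using r(2) by (rule order_less_trans)
      then show ?case using elim by (meson le_less_trans)
    qed
  qed
  show ?thesis
  proof
    show "((\<lambda>A. Limsup at_top (\<lambda>x. ereal (f A x))) \<longlongrightarrow> ereal c) at_top"
    proof (rule order_tendstoI)
      fix a assume "a < ereal c"
      from lower[OF this] show "eventually (\<lambda>A. a < Limsup at_top (\<lambda>x. ereal (f A x))) at_top"
        by eventually_elim (use LL in \<open>meson less_le_trans\<close>)
    next
      fix a assume "ereal c < a"
      from upper[OF this] show "eventually (\<lambda>A. Limsup at_top (\<lambda>x. ereal (f A x)) < a) at_top" .
    qed
    show "((\<lambda>A. Liminf at_top (\<lambda>x. ereal (f A x))) \<longlongrightarrow> ereal c) at_top"
    proof (rule order_tendstoI)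
      fix a assume "a < ereal c"
      from lower[OF this] show "eventually (\<lambda>A. a < Liminf at_top (\<lambda>x. ereal (f A x))) at_top" .
    next
      fix a assume "ereal c < a"
      from upper[OF this] show "eventually (\<lambda>A. Liminf at_top (\<lambda>x. ereal (f A x)) < a) at_top"
        by eventually_elim (use LL in \<open>meson le_less_trans\<close>)
    qed
  qed
qed


theorem lemma4p1:
  fixes \<mu> :: "real measure" and \<gamma> :: real and n :: nat
  assumes "\<gamma> > 0" and "n \<ge> 2"
    and "real_distribution \<mu>"
    and "\<forall>x. tail \<mu> x > 0"
  shows "(\<forall>A x. A > 0 \<longrightarrow> x > real n * A \<longrightarrow>
            tail (conv_pow \<mu> n) x \<le> real n * J1 \<mu> n A x + real n * J2 \<mu> n A x \<and>
            real n * J1 \<mu> n A x - real n * (real n - 3) / 2 * J2 \<mu> n A x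
              - real n * (real n - 1) / 2 * J3 \<mu> A x \<le> tail (conv_pow \<mu> n) x)
    \<and> (class_S \<gamma> (conv_pow \<mu> n) \<longrightarrow>
         ((\<lambda>A. eps \<mu> n A) \<longlongrightarrow> 0) at_top \<and>
         ((\<lambda>A. Liminf at_top (\<lambda>x. ereal (real n * J1 \<mu> n A x / tail (conv_pow \<mu> n) x)))
            \<longlongrightarrow> 1) at_top \<and>
         ((\<lambda>A. Limsup at_top (\<lambda>x. ereal (real n * J1 \<mu> n A x / tail (conv_pow \<mu> n) x)))
            \<longlongrightarrow> 1) at_top)"
proof -
  have rd: "real_distribution \<mu>" and n2: "n \<ge> 2" using assms by auto
  have I: "\<forall>A x. A > 0 \<longrightarrow> x > real n * A \<longrightarrow>
            tail (conv_pow \<mu> n) x \<le> real n * J1 \<mu> n A x + real n * J2 \<mu> n A x \<and>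
            real n * J1 \<mu> n A x - real n * (real n - 3) / 2 * J2 \<mu> n A x
              - real n * (real n - 1) / 2 * J3 \<mu> A x \<le> tail (conv_pow \<mu> n) x"
    using part1[OF rd n2] by blast
  have II: "class_S \<gamma> (conv_pow \<mu> n) \<longrightarrow>
         ((\<lambda>A. eps \<mu> n A) \<longlongrightarrow> 0) at_top \<and>
         ((\<lambda>A. Liminf at_top (\<lambda>x. ereal (real n * J1 \<mu> n A x / tail (conv_pow \<mu> n) x)))
            \<longlongrightarrow> 1) at_top \<and>
         ((\<lambda>A. Limsup at_top (\<lambda>x. ereal (real n * J1 \<mu> n A x / tail (conv_pow \<mu> n) x)))
            \<longlongrightarrow> 1) at_top"
  proof
    assume S: "class_S \<gamma> (conv_pow \<mu> n)"
    have tpos: "\<And>x. tail (conv_pow \<mu> n) x > 0" using S by (auto simp: class_S_def class_L_def)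
    have mc: "\<forall>\<epsilon>>0. \<exists>A0. \<forall>A\<ge>A0. eventually (\<lambda>x. J2 \<mu> n A x + J3 \<mu> A x \<le> \<epsilon> * tail (conv_pow \<mu> n) x) at_top"
      by (rule MC[OF rd n2 S])
    have Ha: "\<forall>\<epsilon>>0. \<exists>A0. \<forall>A\<ge>A0. eventually (\<lambda>x. \<bar>(J2 \<mu> n A x + J3 \<mu> A x) / tail (conv_pow \<mu> n) x - 0\<bar> \<le> \<epsilon>) at_top"
    proof (intro allI impI)
      fix \<epsilon> :: real assume e: "\<epsilon> > 0"
      then obtain A0 where A0: "\<forall>A\<ge>A0. eventually (\<lambda>x. J2 \<mu> n A x + J3 \<mu> A x \<le> \<epsilon> * tail (conv_pow \<mu> n) x) at_top"
        using mc by blast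
      show "\<exists>A0. \<forall>A\<ge>A0. eventually (\<lambda>x. \<bar>(J2 \<mu> n A x + J3 \<mu> A x) / tail (conv_pow \<mu> n) x - 0\<bar> \<le> \<epsilon>) at_top"
      proof (intro exI allI impI)
        fix A assume "A \<ge> A0"
        with A0 have "eventually (\<lambda>x. J2 \<mu> n A x + J3 \<mu> A x \<le> \<epsilon> * tail (conv_pow \<mu> n) x) at_top" by blast
        then show "eventually (\<lambda>x. \<bar>(J2 \<mu> n A x + J3 \<mu> A x) / tail (conv_pow \<mu> n) x - 0\<bar> \<le> \<epsilon>) at_top"
        proof eventually_elim
          case (elim x)
          have t: "tail (conv_pow \<mu> n) x > 0" by (rule tpos)
          have nn: "0 \<le> J2 \<mu> n A x + J3 \<mu> A x" using J2_nonneg[OF rd n2] J3_nonneg by (simp add: add_nonneg_nonneg)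
          have "(J2 \<mu> n A x + J3 \<mu> A x) / tail (conv_pow \<mu> n) x \<le> \<epsilon>" using elim t by (simp add: divide_le_eq)
          moreover have "0 \<le> (J2 \<mu> n A x + J3 \<mu> A x) / tail (conv_pow \<mu> n) x" using nn t by simp
          ultimately show ?case by simp
        qed
      qed
    qed
    have Hb: "\<forall>\<epsilon>>0. \<exists>A0. \<forall>A\<ge>A0. eventually (\<lambda>x. \<bar>real n * J1 \<mu> n A x / tail (conv_pow \<mu> n) x - 1\<bar> \<le> \<epsilon>) at_top"
    proof (intro allI impI)
      fix \<epsilon> :: real assume e: "\<epsilon> > 0"
      have Np: "real n * real n > 0" using n2 by simp
      then have e': "\<epsilon> / (real n * real n) > 0" using e by simp
      then obtain A0 where A0: "\<forall>A\<ge>A0. eventually (\<lambda>x. J2 \<mu> n A x + J3 \<mu> A x \<le> \<epsilon> / (real n * real n) * tail (conv_pow \<mu> n) x) at_top"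
        using mc by blast
      show "\<exists>A0. \<forall>A\<ge>A0. eventually (\<lambda>x. \<bar>real n * J1 \<mu> n A x / tail (conv_pow \<mu> n) x - 1\<bar> \<le> \<epsilon>) at_top"
      proof (intro exI[of _ "max A0 1"] allI impI)
        fix A assume A: "A \<ge> max A0 1"
        with A0 have ev: "eventually (\<lambda>x. J2 \<mu> n A x + J3 \<mu> A x \<le> \<epsilon> / (real n * real n) * tail (conv_pow \<mu> n) x) at_top" by auto
        show "eventually (\<lambda>x. \<bar>real n * J1 \<mu> n A x / tail (conv_pow \<mu> n) x - 1\<bar> \<le> \<epsilon>) at_top"
          using ev eventually_gt_at_top[of "real n * A"]
        proof eventually_elim
          case (elim x)
          have Ap: "A > 0" using A by simp
          have p1: "tail (conv_pow \<mu> n) x \<le> real n * J1 \<mu> n A x + real n * J2 \<mu> n A x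
             \<and> real n * J1 \<mu> n A x - real n * (real n - 3) / 2 * J2 \<mu> n A x
              - real n * (real n - 1) / 2 * J3 \<mu> A x \<le> tail (conv_pow \<mu> n) x"
            using part1[OF rd n2 Ap elim(2)] .
          have "\<bar>real n * J1 \<mu> n A x / tail (conv_pow \<mu> n) x - 1\<bar> \<le> real n * real n * (\<epsilon> / (real n * real n))"
            by (rule ratio_bound[OF tpos _ J2_nonneg[OF rd n2] J3_nonneg]) (use n2 p1 elim(1) in auto)
          also have "\<dots> = \<epsilon>" using n2 by simp
          finally show ?case .
        qed
      qed
    qed
    have a: "((\<lambda>A. eps \<mu> n A) \<longlongrightarrow> 0) at_top"
      using conjunct1[OF lim_bounds[OF Ha]] by (simp add: eps_def zero_ereal_def)
    have b: "((\<lambda>A. Limsup at_top (\<lambda>x. ereal (real n * J1 \<mu> n A x / tail (conv_pow \<mu> n) x))) \<longlongrightarrow> 1) at_top"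
         "((\<lambda>A. Liminf at_top (\<lambda>x. ereal (real n * J1 \<mu> n A x / tail (conv_pow \<mu> n) x))) \<longlongrightarrow> 1) at_top"
      using lim_bounds[OF Hb] by (simp_all add: one_ereal_def)
    show "((\<lambda>A. eps \<mu> n A) \<longlongrightarrow> 0) at_top \<and>
         ((\<lambda>A. Liminf at_top (\<lambda>x. ereal (real n * J1 \<mu> n A x / tail (conv_pow \<mu> n) x)))
            \<longlongrightarrow> 1) at_top \<and>
         ((\<lambda>A. Limsup at_top (\<lambda>x. ereal (real n * J1 \<mu> n A x / tail (conv_pow \<mu> n) x)))
            \<longlongrightarrow> 1) at_top" using a b by blast
  qed
  show ?thesis using I II by blast
qed


end
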